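(* If $G$ is a connected bipartite graph with $n(G)\ge 3$ vertices, then $\dim_{n\ell}(G)=\dim(G)$.
   Context: Graphs are finite, simple and connected; $d_G(u,v)$ is the shortest-path distance and $n(G)$ the number of vertices. A set $X\subseteq V(G)$ resolves two vertices $u,v$ if some $x\in X$ satisfies $d_G(u,x)\neq d_G(v,x)$. $X$ is a resolving set if it resolves every pair of distinct vertices; the metric dimension $\dim(G)$ is the minimum size of a resolving set. $X$ is a nonlocal resolving set if it resolves every pair of distinct non-adjacent vertices; the nonlocal metric dimension $\dim_{n\ell}(G)$ is the minimum size of a nonlocal resolving set (so $\dim_{n\ell}(K_n)=0$), and a nonlocal metric basis is a nonlocal resolving set of this minimum size. *)

theory Defs
  imports Main
begin

definition simple_graph :: "'a set \<Rightarrow> ('a \<Rightarrow> 'a \<Rightarrow> bool) \<Rightarrow> bool" where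
  "simple_graph V E \<longleftrightarrow> finite V \<and> (\<forall>u v. E u v \<longrightarrow> u \<in> V \<and> v \<in> V)
     \<and> (\<forall>u v. E u v \<longrightarrow> E v u) \<and> (\<forall>u. \<not> E u u)"

definition is_walk :: "'a set \<Rightarrow> ('a \<Rightarrow> 'a \<Rightarrow> bool) \<Rightarrow> 'a list \<Rightarrow> 'a \<Rightarrow> 'a \<Rightarrow> bool" where
  "is_walk V E p u v \<longleftrightarrow> p \<noteq> [] \<and> hd p = u \<and> last p = v \<and> set p \<subseteq> V
     \<and> (\<forall>i. Suc i < length p \<longrightarrow> E (p ! i) (p ! Suc i))"

definition graph_connected :: "'a set \<Rightarrow> ('a \<Rightarrow> 'a \<Rightarrow> bool) \<Rightarrow> bool" where
  "graph_connected V E \<longleftrightarrow> V \<noteq> {} \<and> (\<forall>u\<in>V. \<forall>v\<in>V. \<exists>p. is_walk V E p u v)"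

definition gdist :: "'a set \<Rightarrow> ('a \<Rightarrow> 'a \<Rightarrow> bool) \<Rightarrow> 'a \<Rightarrow> 'a \<Rightarrow> nat" where
  "gdist V E u v = (LEAST n. \<exists>p. is_walk V E p u v \<and> length p = Suc n)"

definition bipartite :: "'a set \<Rightarrow> ('a \<Rightarrow> 'a \<Rightarrow> bool) \<Rightarrow> bool" where
  "bipartite V E \<longleftrightarrow> (\<exists>A B. A \<union> B = V \<and> A \<inter> B = {}
     \<and> (\<forall>u v. E u v \<longrightarrow> (u \<in> A \<and> v \<in> B) \<or> (u \<in> B \<and> v \<in> A)))"

definition resolves :: "'a set \<Rightarrow> ('a \<Rightarrow> 'a \<Rightarrow> bool) \<Rightarrow> 'a set \<Rightarrow> 'a \<Rightarrow> 'a \<Rightarrow> bool" where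
  "resolves V E X u v \<longleftrightarrow> (\<exists>x\<in>X. gdist V E u x \<noteq> gdist V E v x)"

definition resolving_set :: "'a set \<Rightarrow> ('a \<Rightarrow> 'a \<Rightarrow> bool) \<Rightarrow> 'a set \<Rightarrow> bool" where
  "resolving_set V E X \<longleftrightarrow> X \<subseteq> V \<and>
     (\<forall>u\<in>V. \<forall>v\<in>V. u \<noteq> v \<longrightarrow> resolves V E X u v)"

definition nonlocal_resolving_set :: "'a set \<Rightarrow> ('a \<Rightarrow> 'a \<Rightarrow> bool) \<Rightarrow> 'a set \<Rightarrow> bool" where
  "nonlocal_resolving_set V E X \<longleftrightarrow> X \<subseteq> V \<and>
     (\<forall>u\<in>V. \<forall>v\<in>V. u \<noteq> v \<and> \<not> E u v \<longrightarrow> resolves V E X u v)"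

definition metric_dim :: "'a set \<Rightarrow> ('a \<Rightarrow> 'a \<Rightarrow> bool) \<Rightarrow> nat" where
  "metric_dim V E = (LEAST k. \<exists>X. resolving_set V E X \<and> card X = k)"

definition nonlocal_metric_dim :: "'a set \<Rightarrow> ('a \<Rightarrow> 'a \<Rightarrow> bool) \<Rightarrow> nat" where
  "nonlocal_metric_dim V E = (LEAST k. \<exists>X. nonlocal_resolving_set V E X \<and> card X = k)"

end

theory Submission
  imports Defs
begin

lemma walk_parity:
  assumes AB: "A \<inter> B = {}" "\<forall>u v. E u v \<longrightarrow> (u \<in> A \<and> v \<in> B) \<or> (u \<in> B \<and> v \<in> A)"
  shows "p \<noteq> [] \<Longrightarrow> (\<forall>i. Suc i < length p \<longrightarrow> E (p ! i) (p ! Suc i)) \<Longrightarrow>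
     ((hd p \<in> A) = (last p \<in> A)) = even (length p - 1)"
proof (induction p)
  case Nil
  then show ?case by simp
next
  case (Cons a p)
  show ?case
  proof (cases "p = []")
    case True
    then show ?thesis by simp
  next
    case False
    have e: "E a (hd p)" using Cons.prems(2)[rule_format, of 0] False
      by (simp add: hd_conv_nth)
    have t: "\<forall>i. Suc i < length p \<longrightarrow> E (p ! i) (p ! Suc i)"
    proof (intro allI impI)
      fix i assume "Suc i < length p"
      then show "E (p ! i) (p ! Suc i)" using Cons.prems(2)[rule_format, of "Suc i"] by simp
    qed
    have ih: "((hd p \<in> A) = (last p \<in> A)) = even (length p - 1)" using Cons.IH False t by blast
    have "(a \<in> A) = (hd p \<notin> A)" using e AB by blast
    moreover have "length p - 1 + 1 = length (a # p) - 1" using False by simp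
    ultimately show ?thesis using ih False by auto
  qed
qed

lemma dist_parity:
  assumes conn: "graph_connected V E" and u: "u \<in> V" and x: "x \<in> V"
    and AB: "A \<inter> B = {}" "\<forall>u v. E u v \<longrightarrow> (u \<in> A \<and> v \<in> B) \<or> (u \<in> B \<and> v \<in> A)"
  shows "((u \<in> A) = (x \<in> A)) = even (gdist V E u x)"
proof -
  obtain p where p: "is_walk V E p u x" using conn u x unfolding graph_connected_def by blast
  then have "\<exists>n q. is_walk V E q u x \<and> length q = Suc n"
  proof -
    have "length p = Suc (length p - 1)" using p unfolding is_walk_def by (cases p) auto
    then show ?thesis using p by blast
  qed
  then have "\<exists>q. is_walk V E q u x \<and> length q = Suc (gdist V E u x)"
    unfolding gdist_def by (elim exE) (rule LeastI_ex, blast)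
  then obtain q where q: "is_walk V E q u x" "length q = Suc (gdist V E u x)" by blast
  have "((hd q \<in> A) = (last q \<in> A)) = even (length q - 1)"
    using walk_parity[OF AB, of q] q unfolding is_walk_def by blast
  then show ?thesis using q unfolding is_walk_def by simp
qed

theorem proposition2p2:
  fixes V :: "'a set" and E :: "'a \<Rightarrow> 'a \<Rightarrow> bool"
  assumes "simple_graph V E"
    and "graph_connected V E"
    and "bipartite V E"
    and "card V \<ge> 3"
  shows "nonlocal_metric_dim V E = metric_dim V E"
proof -
  obtain A B where AB: "A \<union> B = V" "A \<inter> B = {}"
     "\<forall>u v. E u v \<longrightarrow> (u \<in> A \<and> v \<in> B) \<or> (u \<in> B \<and> v \<in> A)"
    using assms(3) unfolding bipartite_def by blast
  have eq: "nonlocal_resolving_set V E X = resolving_set V E X" for X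
  proof
    assume "resolving_set V E X" then show "nonlocal_resolving_set V E X"
      unfolding resolving_set_def nonlocal_resolving_set_def by blast
  next
    assume nl: "nonlocal_resolving_set V E X"
    have "X \<noteq> {}"
    proof
      assume X0: "X = {}"
      obtain a b c where abc: "a \<in> V" "b \<in> V" "c \<in> V" "a \<noteq> b" "a \<noteq> c" "b \<noteq> c"
        using assms(4) by (auto simp: card_le_Suc_iff numeral_3_eq_3 dest!: Suc_le_D)
      have "\<exists>u\<in>V. \<exists>v\<in>V. u \<noteq> v \<and> \<not> E u v"
        using abc AB by blast
      then show False using nl X0 unfolding nonlocal_resolving_set_def resolves_def by blast
    qed
    then obtain x where xX: "x \<in> X" by blast
    have xV: "x \<in> V" using nl xX unfolding nonlocal_resolving_set_def by blast
    show "resolving_set V E X" unfolding resolving_set_def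
    proof (intro conjI ballI impI)
      show "X \<subseteq> V" using nl unfolding nonlocal_resolving_set_def by blast
    next
      fix u v assume uv: "u \<in> V" "v \<in> V" "u \<noteq> v"
      show "resolves V E X u v"
      proof (cases "E u v")
        case False
        then show ?thesis using nl uv unfolding nonlocal_resolving_set_def by blast
      next
        case True
        have "(u \<in> A) = (v \<notin> A)" using True AB by blast
        moreover have "((u \<in> A) = (x \<in> A)) = even (gdist V E u x)"
          by (rule dist_parity[OF assms(2) uv(1) xV AB(2,3)])
        moreover have "((v \<in> A) = (x \<in> A)) = even (gdist V E v x)"
          by (rule dist_parity[OF assms(2) uv(2) xV AB(2,3)])
        ultimately have "gdist V E u x \<noteq> gdist V E v x" by auto
        then show ?thesis using xX unfolding resolves_def by blast
      qed
    qed
  qed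
  show ?thesis unfolding nonlocal_metric_dim_def metric_dim_def eq ..
qed

end
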